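(* Let $\varphi\colon\mathbb{R}\to(-\infty,+\infty]$ be a proper convex lower semi-continuous function with $\varphi(0)<+\infty$. Then at every $p\in\mathbb{R}$ where the right derivatives are defined, $(\varphi_\uparrow^* )'_+(p)=\max\{0,(\varphi^* )'_+(p)\}$.
   Context: $\varphi_\uparrow(x)=\varphi(x)$ for $x\ge0$ and $+\infty$ for $x<0$. $g^*(p)=\sup_{x\in\mathbb{R}}\{xp-g(x)\}$ is the convex conjugate, and $g'_+(x)=\lim_{h\downarrow0}(g(x+h)-g(x))/h$ is the right derivative. *)

theory Defs
  imports "HOL-Analysis.Analysis"
begin

text \<open>Extended-real valued functions \<open>real \<Rightarrow> ereal\<close> model functions into (-\<infinity>,+\<infinity>].\<close>

definition proper_fun :: "(real \<Rightarrow> ereal) \<Rightarrow> bool" where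
  "proper_fun g \<longleftrightarrow> (\<forall>x. g x \<noteq> -\<infinity>) \<and> (\<exists>x. g x \<noteq> \<infinity>)"

definition convex_fun :: "(real \<Rightarrow> ereal) \<Rightarrow> bool" where
  "convex_fun g \<longleftrightarrow> (\<forall>x y t. 0 \<le> t \<and> t \<le> 1 \<longrightarrow>
      g ((1 - t) * x + t * y) \<le> ereal (1 - t) * g x + ereal t * g y)"

definition lsc_fun :: "(real \<Rightarrow> ereal) \<Rightarrow> bool" where
  "lsc_fun g \<longleftrightarrow> (\<forall>x. g x \<le> Liminf (at x) g)"

definition convex_conj :: "(real \<Rightarrow> ereal) \<Rightarrow> real \<Rightarrow> ereal" where
  "convex_conj g p = (SUP x. ereal (x * p) - g x)"

definition up :: "(real \<Rightarrow> ereal) \<Rightarrow> real \<Rightarrow> ereal" where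
  "up g x = (if 0 \<le> x then g x else \<infinity>)"

definition has_rderiv :: "(real \<Rightarrow> ereal) \<Rightarrow> real \<Rightarrow> ereal \<Rightarrow> bool" where
  "has_rderiv g p D \<longleftrightarrow> \<bar>g p\<bar> \<noteq> \<infinity> \<and>
      ((\<lambda>h. (g (p + h) - g p) / ereal h) \<longlongrightarrow> D) (at_right 0)"

end

theory Submission imports Defs begin
lemma q_nonpos: fixes a b :: ereal assumes "a \<le> b" "\<bar>b\<bar> \<noteq> \<infinity>" "h > 0"
  shows "(a - b) / ereal h \<le> 0"
  using assms by (cases a; cases b) (auto simp: field_simps)
lemma q_nonneg: fixes a b :: ereal assumes "b \<le> a" "\<bar>b\<bar> \<noteq> \<infinity>" "h > 0"
  shows "0 \<le> (a - b) / ereal h"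
  using assms by (cases a; cases b) (auto simp: field_simps)
lemma q_zero: fixes b :: ereal assumes "\<bar>b\<bar> \<noteq> \<infinity>" "h > 0"
  shows "(b - b) / ereal h = 0"
  using assms by (cases b) (auto simp: field_simps)
lemma lim_le: fixes D :: ereal assumes "(f \<longlongrightarrow> D) (at_right (0::real))" "\<forall>\<^sub>F h in at_right 0. f h \<le> 0" shows "D \<le> 0"
  using tendsto_upperbound[OF assms] by simp
lemma lim_ge: fixes D :: ereal assumes "(f \<longlongrightarrow> D) (at_right (0::real))" "\<forall>\<^sub>F h in at_right 0. 0 \<le> f h" shows "0 \<le> D"
  using tendsto_lowerbound[OF assms] by simp
lemma keyineq:
  fixes x0 x p h a0 ax c Gp d :: real
  assumes "x0 < 0" "0 < x" "(x - x0) * c \<le> x * a0 - x0 * ax" "0 \<le> c + Gp"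
    "x0 * p - a0 = Gp + d" "0 < d" "0 < h" "h * (- x0) < d"
  shows "x * (p + h) - ax \<le> Gp"
proof -
  have "-x0 * (x * (p + h) - ax) \<le> -x0 * Gp"
  proof -
    have e: "-x0 * (x * (p + h) - ax) - (-x0 * Gp) = - x0 * x * (p + h) + x0 * ax + x0 * Gp" by (simp add: algebra_simps)
    have "x0 * ax \<le> x * a0 - (x - x0) * c" using assms(3) by linarith
    hence "- x0 * x * (p + h) + x0 * ax + x0 * Gp \<le> - x0 * x * (p + h) + x * a0 - (x - x0) * c + x0 * Gp" by linarith
    also have "\<dots> = x * (-x0 * h - d) + (x0 - x) * (c + Gp)" using assms(5) by (simp add: algebra_simps)
    also have "\<dots> \<le> 0"
    proof -
      have "x * (-x0 * h - d) \<le> 0" using assms by (intro mult_nonneg_nonpos) (auto simp: algebra_simps)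
      moreover have "(x0 - x) * (c + Gp) \<le> 0" using assms by (intro mult_nonpos_nonneg) auto
      ultimately show ?thesis by linarith
    qed
    finally show ?thesis using e by linarith
  qed
  thus ?thesis using assms(1) by (simp add: mult_le_cancel_left)
qed
lemma lim_eq0: fixes D :: ereal assumes "(f \<longlongrightarrow> D) (at_right (0::real))" "\<forall>\<^sub>F h in at_right 0. f h = 0" shows "D = 0"
proof -
  have "D \<le> 0" by (rule tendsto_upperbound[OF assms(1)]) (use assms(2) in \<open>auto elim: eventually_mono\<close>)
  moreover have "0 \<le> D" by (rule tendsto_lowerbound[OF assms(1)]) (use assms(2) in \<open>auto elim: eventually_mono\<close>)
  ultimately show ?thesis by simp
qed

theorem lemma5:
  fixes \<phi> :: "real \<Rightarrow> ereal" and p :: real and D D\<^sub>u\<^sub>p :: ereal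
  assumes "proper_fun \<phi>" and "convex_fun \<phi>" and "lsc_fun \<phi>"
    and "\<phi> 0 < \<infinity>"
    and "has_rderiv (convex_conj \<phi>) p D"
    and "has_rderiv (convex_conj (up \<phi>)) p D\<^sub>u\<^sub>p"
  shows "D\<^sub>u\<^sub>p = max 0 D"
proof -
  define F where "F = convex_conj \<phi>"
  define G where "G = convex_conj (up \<phi>)"
  have Ffin: "\<bar>F p\<bar> \<noteq> \<infinity>" and Flim: "((\<lambda>h. (F (p + h) - F p) / ereal h) \<longlongrightarrow> D) (at_right 0)"
    using assms(5) unfolding has_rderiv_def F_def by auto
  have Gfin: "\<bar>G p\<bar> \<noteq> \<infinity>" and Glim: "((\<lambda>h. (G (p + h) - G p) / ereal h) \<longlongrightarrow> D\<^sub>u\<^sub>p) (at_right 0)"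
    using assms(6) unfolding has_rderiv_def G_def by auto
  have L1: "ereal (x * q) - \<phi> x \<le> G q" if "0 \<le> x" for x q
  proof -
    have "ereal (x * q) - up \<phi> x \<le> G q" unfolding G_def convex_conj_def by (rule SUP_upper) simp
    thus ?thesis using that by (simp add: up_def)
  qed
  have LF: "ereal (x * q) - \<phi> x \<le> F q" for x q
    unfolding F_def convex_conj_def by (rule SUP_upper) simp
  have L2: "G q \<le> F q" for q
    unfolding G_def F_def convex_conj_def
    by (rule SUP_mono) (auto simp: up_def)
  have L3: "G q \<le> G q'" if "q \<le> q'" for q q'
    unfolding G_def convex_conj_def
  proof (rule SUP_mono)
    fix x
    show "\<exists>m\<in>UNIV. ereal (x * q) - up \<phi> x \<le> ereal (m * q') - up \<phi> m"
    proof (cases "0 \<le> x")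
      case True
      hence "x * q \<le> x * q'" using that by (simp add: mult_left_mono)
      hence "ereal (x * q) - up \<phi> x \<le> ereal (x * q') - up \<phi> x"
        by (intro ereal_minus_mono) auto
      thus ?thesis by blast
    next
      case False thus ?thesis by (auto simp: up_def)
    qed
  qed
  have L4: "ereal (x * (p + h)) - \<phi> x \<le> F p" if "x < 0" "0 \<le> h" for x h
  proof -
    have "x * (p + h) \<le> x * p" using that by (simp add: algebra_simps mult_nonneg_nonpos)
    hence "ereal (x * (p + h)) - \<phi> x \<le> ereal (x * p) - \<phi> x"
      by (intro ereal_minus_mono) auto
    also have "\<dots> \<le> F p" by (rule LF)
    finally show ?thesis .
  qed
  show ?thesis
  proof (cases "G p = F p")
    case True
    have eqFG: "F (p + h) = G (p + h)" if "0 < h" for h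
    proof (rule antisym)
      show "F (p + h) \<le> G (p + h)"
        unfolding F_def convex_conj_def
      proof (rule SUP_least)
        fix x
        show "ereal (x * (p + h)) - \<phi> x \<le> G (p + h)"
        proof (cases "0 \<le> x")
          case True thus ?thesis by (rule L1)
        next
          case False
          hence "ereal (x * (p + h)) - \<phi> x \<le> F p" using L4 that by simp
          also have "\<dots> = G p" using \<open>G p = F p\<close> by simp
          also have "\<dots> \<le> G (p + h)" using that by (intro L3) simp
          finally show ?thesis .
        qed
      qed
    qed (rule L2)
    have ev: "\<forall>\<^sub>F h in at_right 0. (F (p + h) - F p) / ereal h = (G (p + h) - G p) / ereal h"
      using eqFG True by (auto simp: eventually_at_right_field intro!: exI[of _ 1])
    have "((\<lambda>h. (G (p + h) - G p) / ereal h) \<longlongrightarrow> D) (at_right 0)"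
      using Flim tendsto_cong[OF ev] by simp
    hence DD: "D = D\<^sub>u\<^sub>p" using Glim by (intro tendsto_unique) auto
    have "0 \<le> D\<^sub>u\<^sub>p"
    proof (rule lim_ge[OF Glim])
      show "\<forall>\<^sub>F h in at_right 0. 0 \<le> (G (p + h) - G p) / ereal h"
        unfolding eventually_at_right_field
        by (rule exI[of _ 1]) (auto intro!: q_nonneg L3 Gfin)
    qed
    thus ?thesis using DD by (simp add: max_def)
  next
    case False
    hence "G p < F p" using L2[of p] by simp
    then obtain x0 where x0: "G p < ereal (x0 * p) - \<phi> x0"
      unfolding F_def convex_conj_def by (auto simp: less_SUP_iff)
    have x0neg: "x0 < 0" using L1[of x0 p] x0 by (cases "0 \<le> x0") auto
    obtain Gp where Gp: "G p = ereal Gp" using Gfin by (cases "G p") auto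
    obtain Fp where Fp: "F p = ereal Fp" using Ffin by (cases "F p") auto
    have "\<phi> x0 \<noteq> \<infinity>" using x0 by auto
    moreover have "\<phi> x0 \<noteq> -\<infinity>" using LF[of x0 p] Fp by auto
    ultimately obtain a0 where a0: "\<phi> x0 = ereal a0" by (cases "\<phi> x0") auto
    have "\<phi> 0 \<noteq> -\<infinity>" using L1[of 0 p] Gp by auto
    then obtain c where c: "\<phi> 0 = ereal c" using assms(4) by (cases "\<phi> 0") auto
    have cG: "0 \<le> c + Gp" using L1[of 0 p] Gp c by simp
    define d where "d = x0 * p - a0 - Gp"
    have dpos: "0 < d" using x0 Gp a0 d_def by simp
    have Geq: "G (p + h) = G p" if h: "0 < h" "h * (- x0) < d" for h
    proof (rule antisym)
      show "G (p + h) \<le> G p"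
        unfolding G_def convex_conj_def[of _ "p + h"]
      proof (rule SUP_least)
        fix x
        show "ereal (x * (p + h)) - up \<phi> x \<le> convex_conj (up \<phi>) p"
        proof (cases "x < 0")
          case True thus ?thesis by (simp add: up_def)
        next
          case False
          show ?thesis
          proof (cases "x = 0")
            case True
            thus ?thesis using L1[of 0 p] by (simp add: up_def G_def)
          next
            case False
            hence xpos: "0 < x" using \<open>\<not> x < 0\<close> by simp
            show ?thesis
            proof (cases "\<phi> x = \<infinity>")
              case True thus ?thesis using xpos by (simp add: up_def)
            next
              case False
              have "\<phi> x \<noteq> -\<infinity>" using L1[of x p] Gp xpos by auto
              then obtain ax where ax: "\<phi> x = ereal ax" using False by (cases "\<phi> x") auto
              define t where "t = - x0 / (x - x0)"
              have t01: "0 \<le> t" "t \<le> 1" using xpos x0neg by (auto simp: t_def divide_simps)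
              have pt: "(1 - t) * x0 + t * x = 0" using xpos x0neg
                by (simp add: t_def field_simps)
              have "\<phi> ((1 - t) * x0 + t * x) \<le> ereal (1 - t) * \<phi> x0 + ereal t * \<phi> x"
                using assms(2) t01 unfolding convex_fun_def by blast
              hence "c \<le> (1 - t) * a0 + t * ax" using pt c a0 ax by simp
              hence "(x - x0) * c \<le> (x - x0) * ((1 - t) * a0 + t * ax)"
                using xpos x0neg by (intro mult_left_mono) auto
              also have "\<dots> = ((x - x0) * (1 - t)) * a0 + ((x - x0) * t) * ax"
                by (simp add: algebra_simps)
              also have "(x - x0) * (1 - t) = x" using xpos x0neg
                by (simp add: t_def field_simps)
              also have "(x - x0) * t = - x0" using xpos x0neg
                by (simp add: t_def field_simps)
              finally have "(x - x0) * c \<le> x * a0 + - x0 * ax" .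
              hence "(x - x0) * c \<le> x * a0 - x0 * ax" by simp
              hence "x * (p + h) - ax \<le> Gp"
                by (intro keyineq[OF x0neg xpos _ cG _ dpos h]) (auto simp: d_def)
              thus ?thesis using ax xpos Gp by (simp add: up_def G_def)
            qed
          qed
        qed
      qed
    qed (rule L3, use h in simp)
    have evG: "\<forall>\<^sub>F h in at_right 0. (G (p + h) - G p) / ereal h = 0"
      unfolding eventually_at_right_field
    proof (intro exI[of _ "d / (- x0)"] conjI allI impI)
      show "0 < d / (- x0)" using dpos x0neg by (intro divide_pos_pos) auto
      fix y :: real assume y: "0 < y" "y < d / (- x0)"
      hence "y * (- x0) < d" using x0neg by (simp add: field_simps)
      hence "G (p + y) = G p" using Geq y by simp
      thus "(G (p + y) - G p) / ereal y = 0" using q_zero[OF Gfin y(1)] by simp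
    qed
    have Dup0: "D\<^sub>u\<^sub>p = 0" by (rule lim_eq0[OF Glim evG])
    have Fle: "F (p + h) \<le> F p" if h: "0 < h" "h * (- x0) < d" for h
      unfolding F_def convex_conj_def[of _ "p + h"]
    proof (rule SUP_least)
      fix x
      show "ereal (x * (p + h)) - \<phi> x \<le> convex_conj \<phi> p"
      proof (cases "x < 0")
        case True thus ?thesis using L4[of x h] h by (simp add: F_def)
      next
        case False
        hence "ereal (x * (p + h)) - \<phi> x \<le> G (p + h)" by (intro L1) simp
        also have "\<dots> = G p" using Geq h by simp
        also have "\<dots> \<le> F p" by (rule L2)
        finally show ?thesis by (simp add: F_def)
      qed
    qed
    have evF: "\<forall>\<^sub>F h in at_right 0. (F (p + h) - F p) / ereal h \<le> 0"
      unfolding eventually_at_right_field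
    proof (intro exI[of _ "d / (- x0)"] conjI allI impI)
      show "0 < d / (- x0)" using dpos x0neg by (intro divide_pos_pos) auto
      fix y :: real assume y: "0 < y" "y < d / (- x0)"
      hence "y * (- x0) < d" using x0neg by (simp add: field_simps)
      hence "F (p + y) \<le> F p" using Fle y by simp
      thus "(F (p + y) - F p) / ereal y \<le> 0" by (rule q_nonpos[OF _ Ffin y(1)])
    qed
    have "D \<le> 0" by (rule lim_le[OF Flim evF])
    thus ?thesis using Dup0 by (simp add: max_def)
  qed
qed
end
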